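(* Every element of $PSL(2,\mathbb H(\mathbb Z))$, i.e. every transformation $q\mapsto(aq+b)(cq+d)^{-1}$ induced by an invertible matrix $\begin{pmatrix}a&b\\c&d\end{pmatrix}$ with entries in the Lipschitz integers $\mathbb H(\mathbb Z)$, which satisfies the (BG) conditions belongs to the Lipschitz quaternionic modular group $PSL(2,\mathfrak L)$.
   Context: $\mathbb H(\mathbb Z)=\{a+b\mathbf i+c\mathbf j+d\mathbf k:a,b,c,d\in\mathbb Z\}$ (Lipschitz integers). A quaternionic matrix $A$ satisfies the (BG) conditions if $\bar A^tKA=K$, $K=\begin{pmatrix}0&1\\1&0\end{pmatrix}$, equivalently $\Re(a\bar c)=0$, $\Re(b\bar d)=0$, $\bar bc+\bar da=1$; these are exactly the matrices inducing orientation-preserving isometries of $\mathbf H^1_{\mathbb H}=\{q:\Re q>0\}$. $PSL(2,\mathfrak L)$ is the group generated by $T(q)=q^{-1}$ and the translations $q\mapsto q+\omega$, $\omega\in\{b\mathbf i+c\mathbf j+d\mathbf k:b,c,d\in\mathbb Z\}$. *)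

theory Defs
  imports Complex_Main
begin

datatype quat = Quat (Re: real) (Im1: real) (Im2: real) (Im3: real)

lemma quat_eq_iff: "x = y \<longleftrightarrow> Re x = Re y \<and> Im1 x = Im1 y \<and> Im2 x = Im2 y \<and> Im3 x = Im3 y"
  by (cases x; cases y) auto

instantiation quat :: ab_group_add
begin
definition "0 = Quat 0 0 0 0"
definition "x + y = Quat (Re x + Re y) (Im1 x + Im1 y) (Im2 x + Im2 y) (Im3 x + Im3 y)"
definition "- x = Quat (- Re x) (- Im1 x) (- Im2 x) (- Im3 x)"
definition "x - y = Quat (Re x - Re y) (Im1 x - Im1 y) (Im2 x - Im2 y) (Im3 x - Im3 y)"
instance by standard (simp_all add: quat_eq_iff zero_quat_def plus_quat_def uminus_quat_def minus_quat_def)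
end

instantiation quat :: ring_1
begin
definition "1 = Quat 1 0 0 0"
definition "x * y = Quat
  (Re x * Re y - Im1 x * Im1 y - Im2 x * Im2 y - Im3 x * Im3 y)
  (Re x * Im1 y + Im1 x * Re y + Im2 x * Im3 y - Im3 x * Im2 y)
  (Re x * Im2 y - Im1 x * Im3 y + Im2 x * Re y + Im3 x * Im1 y)
  (Re x * Im3 y + Im1 x * Im2 y - Im2 x * Im1 y + Im3 x * Re y)"
instance by standard
  (simp_all add: quat_eq_iff zero_quat_def plus_quat_def one_quat_def times_quat_def algebra_simps)
end

definition qnorm2 :: "quat \<Rightarrow> real" where
  "qnorm2 x = (Re x)\<^sup>2 + (Im1 x)\<^sup>2 + (Im2 x)\<^sup>2 + (Im3 x)\<^sup>2"

definition cnj :: "quat \<Rightarrow> quat" where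
  "cnj x = Quat (Re x) (- Im1 x) (- Im2 x) (- Im3 x)"

instantiation quat :: division_ring
begin
definition "inverse x = Quat (Re x / qnorm2 x) (- Im1 x / qnorm2 x) (- Im2 x / qnorm2 x) (- Im3 x / qnorm2 x)"
definition "x div (y::quat) = x * inverse y"
instance
proof
  fix x y :: quat
  assume "x \<noteq> 0"
  then have n: "qnorm2 x \<noteq> 0"
    by (auto simp: qnorm2_def quat_eq_iff zero_quat_def add_nonneg_eq_0_iff)
  define N where "N = qnorm2 x"
  have N: "N = (Re x)\<^sup>2 + (Im1 x)\<^sup>2 + (Im2 x)\<^sup>2 + (Im3 x)\<^sup>2" "N \<noteq> 0"
    using n by (simp_all add: N_def qnorm2_def)
  show "inverse x * x = 1" "x * inverse x = 1"
    unfolding quat_eq_iff inverse_quat_def times_quat_def one_quat_def N_def[symmetric]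
    using N by (simp_all add: divide_simps, simp_all add: power2_eq_square algebra_simps)
next
  fix x y :: quat show "x div y = x * inverse y" by (simp add: divide_quat_def)
next
  show "inverse (0::quat) = 0" by (simp add: inverse_quat_def zero_quat_def quat_eq_iff)
qed
end

definition lipschitz :: "quat \<Rightarrow> bool" where
  "lipschitz q \<longleftrightarrow> Re q \<in> \<int> \<and> Im1 q \<in> \<int> \<and> Im2 q \<in> \<int> \<and> Im3 q \<in> \<int>"

definition lipschitz_imag :: "quat \<Rightarrow> bool" where
  "lipschitz_imag w \<longleftrightarrow> lipschitz w \<and> Re w = 0"

text \<open>(BG): \<open>conj(A)^t K A = K\<close> with \<open>A = [[a,b],[c,d]]\<close>, \<open>K = [[0,1],[1,0]]\<close>,
  written out entrywise.\<close>
definition BG :: "quat \<Rightarrow> quat \<Rightarrow> quat \<Rightarrow> quat \<Rightarrow> bool" where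
  "BG a b c d \<longleftrightarrow>
     cnj a * c + cnj c * a = 0 \<and> cnj a * d + cnj c * b = 1 \<and>
     cnj b * c + cnj d * a = 1 \<and> cnj b * d + cnj d * b = 0"

definition mobius :: "quat \<Rightarrow> quat \<Rightarrow> quat \<Rightarrow> quat \<Rightarrow> quat \<Rightarrow> quat" where
  "mobius a b c d q = (a * q + b) * inverse (c * q + d)"

definition halfspace :: "quat set" where
  "halfspace = {q. Re q > 0}"

text \<open>Generators: \<open>T(q) = q^{-1}\<close> and translations by purely imaginary Lipschitz integers.
  The generating set is closed under inverses (\<open>T\<close> is an involution, the inverse of the
  translation by \<open>w\<close> is the translation by \<open>-w\<close>), so the closure under composition
  containing the identity is the generated group.\<close>
inductive_set PSL2L :: "(quat \<Rightarrow> quat) set" where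
  id: "id \<in> PSL2L"
| T: "f \<in> PSL2L \<Longrightarrow> inverse \<circ> f \<in> PSL2L"
| trans: "f \<in> PSL2L \<Longrightarrow> lipschitz_imag w \<Longrightarrow> (\<lambda>q. q + w) \<circ> f \<in> PSL2L"

end

theory Submission
  imports Defs
begin

lemma cnj_add[simp]: "cnj (x + y) = cnj x + cnj y"
  by (simp add: cnj_def plus_quat_def)
lemma cnj_diff[simp]: "cnj (x - y) = cnj x - cnj y"
  by (simp add: cnj_def minus_quat_def)
lemma cnj_mult[simp]: "cnj (x * y) = cnj y * cnj x"
  by (simp add: cnj_def times_quat_def quat_eq_iff algebra_simps)
lemma cnj_cnj[simp]: "cnj (cnj x) = x"
  by (simp add: cnj_def quat_eq_iff)
lemma cnj_one[simp]: "cnj 1 = 1" by (simp add: cnj_def one_quat_def)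
lemma cnj_zero[simp]: "cnj 0 = 0" by (simp add: cnj_def zero_quat_def)
lemma cnj_inj: "cnj x = cnj y \<Longrightarrow> x = y" by (metis cnj_cnj)

lemma qnorm2_mult: "qnorm2 (x * y) = qnorm2 x * qnorm2 y"
  by (simp add: qnorm2_def times_quat_def power2_eq_square algebra_simps)
lemma qnorm2_cnj[simp]: "qnorm2 (cnj x) = qnorm2 x"
  by (simp add: qnorm2_def cnj_def)
lemma qnorm2_nonneg: "qnorm2 x \<ge> 0" by (simp add: qnorm2_def)
lemma qnorm2_pos: "x \<noteq> 0 \<Longrightarrow> qnorm2 x > 0"
proof -
  assume "x \<noteq> 0"
  then have "qnorm2 x \<noteq> 0"
    by (auto simp: qnorm2_def quat_eq_iff zero_quat_def add_nonneg_eq_0_iff)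
  then show ?thesis using qnorm2_nonneg[of x] by linarith
qed

lemma lip_add: "lipschitz x \<Longrightarrow> lipschitz y \<Longrightarrow> lipschitz (x + y)"
  by (simp add: lipschitz_def plus_quat_def)
lemma lip_diff: "lipschitz x \<Longrightarrow> lipschitz y \<Longrightarrow> lipschitz (x - y)"
  by (simp add: lipschitz_def minus_quat_def)
lemma lip_mult: "lipschitz x \<Longrightarrow> lipschitz y \<Longrightarrow> lipschitz (x * y)"
  by (simp add: lipschitz_def times_quat_def)
lemma lip_cnj: "lipschitz x \<Longrightarrow> lipschitz (cnj x)"
  by (simp add: lipschitz_def cnj_def)
lemma qnorm2_Ints: "lipschitz x \<Longrightarrow> qnorm2 x \<in> \<int>"
  by (simp add: lipschitz_def qnorm2_def)

lemma denom_nz: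
  assumes "BG a b c d" "Re q > 0"
  shows "c * q + d \<noteq> 0"
proof
  assume y0: "c * q + d = 0"
  have "cnj (a*q+b) * (c*q+d) + cnj (c*q+d) * (a*q+b) =
    cnj q * (cnj a * c + cnj c * a) * q + cnj q * (cnj a*d + cnj c*b) + (cnj b * c + cnj d * a) * q + (cnj b*d + cnj d*b)"
    by (simp add: algebra_simps)
  also have "\<dots> = cnj q + q" using assms(1) by (simp add: BG_def)
  finally have "cnj q + q = 0" using y0 by simp
  then show False using assms(2) by (simp add: cnj_def plus_quat_def zero_quat_def)
qed

lemma step_eq:
  fixes x y w :: quat
  assumes "y \<noteq> 0"
  shows "inverse (y * inverse (x - w*y)) + w = x * inverse y"
proof (cases "x - w*y = 0")
  case True
  then have "x = w*y" by simp
  then show ?thesis using assms by (simp add: mult.assoc)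
next
  case False
  have "inverse (y * inverse (x - w*y)) = (x - w*y) * inverse y"
    using False assms by (simp add: nonzero_inverse_mult_distrib)
  also have "\<dots> = x * inverse y - w" using assms by (simp add: algebra_simps mult.assoc)
  finally show ?thesis by simp
qed

lemma rot_eq:
  fixes u q :: quat
  assumes uu: "u*u = -1" and q: "q \<noteq> 0" and nz: "1 + u*q \<noteq> 0"
  shows "inverse (inverse (inverse q + u) + u) + u = - (u * q * u)"
proof -
  have iu: "inverse u = - u" using uu
    by (metis add.inverse_inverse inverse_unique minus_mult_right)
  have u0: "u \<noteq> 0" using uu by auto
  have "inverse q + u = (1 + u*q) * inverse q" using q by (simp add: algebra_simps mult.assoc)
  then have "inverse (inverse q + u) = q * inverse (1 + u*q)"
    using q nz by (simp add: nonzero_inverse_mult_distrib)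
  moreover have "(q + u*(1+u*q)) * inverse (1 + u*q) = q * inverse(1+u*q) + u * ((1+u*q) * inverse (1+u*q))"
    by (simp add: distrib_right mult.assoc)
  ultimately have "inverse (inverse q + u) + u = (q + u*(1+u*q)) * inverse (1 + u*q)"
    using nz by simp
  also have "q + u*(1+u*q) = u" using uu by (simp add: algebra_simps flip: mult.assoc)
  finally have "inverse (inverse (inverse q + u) + u) = (1 + u*q) * inverse u"
    using nz u0 by (simp add: nonzero_inverse_mult_distrib)
  then have h: "inverse (inverse (inverse q + u) + u) = - u - u*q*u" using iu by (simp add: algebra_simps)
  show ?thesis unfolding h by simp
qed

lemma Ints_pos_ge1: "(x::real) \<in> \<int> \<Longrightarrow> x > 0 \<Longrightarrow> x \<ge> 1"
  by (metis Ints_cases of_int_0_less_iff of_int_1_le_iff zero_less_imp_eq_int int_one_le_iff_zero_less)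

lemma rot_mem: "lipschitz_imag u \<Longrightarrow>
  (\<lambda>q. q+u) \<circ> (inverse \<circ> ((\<lambda>q. q+u) \<circ> (inverse \<circ> ((\<lambda>q. q+u) \<circ> (inverse \<circ> id))))) \<in> PSL2L"
  by (intro PSL2L.intros)

lemma base:
  assumes la: "lipschitz a" and lb: "lipschitz b" and ld: "lipschitz d"
    and bg: "BG a b 0 d"
  shows "\<exists>f\<in>PSL2L. \<forall>q\<in>halfspace. mobius a b 0 d q = f q"
proof -
  have h1: "cnj d * a = 1" using bg by (simp add: BG_def)
  have a0: "a \<noteq> 0" and d0: "d \<noteq> 0" using h1 by auto
  have "qnorm2 (cnj d * a) = 1" using h1 by (simp add: qnorm2_def one_quat_def)
  then have "qnorm2 d * qnorm2 a = 1" by (simp only: qnorm2_mult qnorm2_cnj)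
  moreover have "qnorm2 a \<ge> 1" using Ints_pos_ge1 qnorm2_Ints[OF la] qnorm2_pos[OF a0] by blast
  moreover have "qnorm2 d \<ge> 1" using Ints_pos_ge1 qnorm2_Ints[OF ld] qnorm2_pos[OF d0] by blast
  ultimately have na: "qnorm2 a = 1"
  proof -
    assume e: "qnorm2 d * qnorm2 a = 1" and g: "qnorm2 a \<ge> 1" "qnorm2 d \<ge> 1"
    have "1 * qnorm2 a \<le> qnorm2 d * qnorm2 a" using g by (intro mult_right_mono) auto
    then show ?thesis using e g by linarith
  qed
  have ca: "cnj a * a = 1" "a * cnj a = 1"
    using na by (simp_all add: quat_eq_iff qnorm2_def cnj_def times_quat_def one_quat_def power2_eq_square algebra_simps)
  have "cnj d = cnj a"
  proof -
    have "cnj d = cnj d * a * cnj a" using ca by (simp add: mult.assoc)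
    also have "\<dots> = cnj a" using h1 by simp
    finally show ?thesis .
  qed
  then have da: "d = a" by (rule cnj_inj)
  have ia: "inverse a = cnj a" using ca(2) by (rule inverse_unique)
  define w where "w = b * cnj a"
  have lw: "lipschitz_imag w"
  proof -
    have "cnj b * a + cnj a * b = 0" using bg da by (simp add: BG_def)
    then have "Re (cnj b * a + cnj a * b) = 0" by (simp add: zero_quat_def)
    then have "Re w = 0" unfolding w_def by (simp add: cnj_def times_quat_def plus_quat_def algebra_simps)
    then show ?thesis unfolding lipschitz_imag_def w_def using lb la by (simp add: lip_mult lip_cnj)
  qed
  have mob: "mobius a b 0 d q = a * q * cnj a + w" for q
    unfolding mobius_def da w_def by (simp add: ia algebra_simps)
  show ?thesis
  proof (cases "Re a = 0")
    case True
    have aa: "a * a = -1" using True na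
      by (simp add: quat_eq_iff qnorm2_def times_quat_def one_quat_def uminus_quat_def power2_eq_square algebra_simps)
    have cn: "cnj a = - a" using True by (simp add: quat_eq_iff cnj_def uminus_quat_def)
    have la': "lipschitz_imag a" using la True by (simp add: lipschitz_imag_def)
    let ?g = "(\<lambda>q. q+a) \<circ> (inverse \<circ> ((\<lambda>q. q+a) \<circ> (inverse \<circ> ((\<lambda>q. q+a) \<circ> (inverse \<circ> id)))))"
    have "(\<lambda>q. q + w) \<circ> ?g \<in> PSL2L" using rot_mem[OF la'] lw by (rule PSL2L.trans)
    moreover have "\<forall>q\<in>halfspace. mobius a b 0 d q = ((\<lambda>q. q + w) \<circ> ?g) q"
    proof
      fix q assume "q \<in> halfspace"
      then have rq: "Re q > 0" by (simp add: halfspace_def)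
      then have q0: "q \<noteq> 0" by (auto simp: zero_quat_def)
      have nz: "1 + a*q \<noteq> 0"
      proof
        assume "1 + a*q = 0"
        then have "a * (1 + a*q) = 0" by simp
        then have "a - q = 0" using aa by (simp add: algebra_simps flip: mult.assoc)
        then show False using rq True by simp
      qed
      show "mobius a b 0 d q = ((\<lambda>q. q + w) \<circ> ?g) q"
        using rot_eq[OF aa q0 nz] by (simp add: mob cn)
    qed
    ultimately show ?thesis by blast
  next
    case False
    have "Re a \<in> \<int>" using la by (simp add: lipschitz_def)
    then obtain k where k: "Re a = of_int k" by (auto elim: Ints_cases)
    have "(Re a)^2 \<le> 1" using na zero_le_power2[of "Im1 a"] zero_le_power2[of "Im2 a"] zero_le_power2[of "Im3 a"]
      unfolding qnorm2_def by linarith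
    then have "k^2 \<le> 1" using k by (metis of_int_le_1_iff of_int_power)
    moreover have "k \<noteq> 0" using False k by simp
    ultimately have "k^2 = 1" using zero_less_power2[of k] by linarith
    then have ra: "(Re a)^2 = 1" using k by (metis of_int_1 of_int_power)
    then have "(Im1 a)^2 + (Im2 a)^2 + (Im3 a)^2 = 0" using na by (simp add: qnorm2_def)
    then have z: "Im1 a = 0" "Im2 a = 0" "Im3 a = 0" by (simp_all add: add_nonneg_eq_0_iff)
    have rot: "a * q * cnj a = q" for q
      using z ra by (simp add: quat_eq_iff times_quat_def cnj_def power2_eq_square algebra_simps)
    have "(\<lambda>q. q + w) \<circ> id \<in> PSL2L" using PSL2L.id lw by (rule PSL2L.trans)
    moreover have "\<forall>q\<in>halfspace. mobius a b 0 d q = ((\<lambda>q. q + w) \<circ> id) q"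
      by (simp add: mob rot)
    ultimately show ?thesis by blast
  qed
qed

lemma bg_step:
  assumes bg: "BG a b c d" and cw: "cnj w = - w"
  shows "BG c d (a - w*c) (b - w*d)"
proof -
  have e: "cnj a * c + cnj c * a = 0" "cnj a * d + cnj c * b = 1"
     "cnj b * c + cnj d * a = 1" "cnj b * d + cnj d * b = 0" using bg by (auto simp: BG_def)
  have 1: "cnj c * (a - w*c) + cnj (a - w*c) * c = cnj a * c + cnj c * a"
    by (simp add: cw algebra_simps)
  have 2: "cnj c * (b - w*d) + cnj (a - w*c) * d = cnj a * d + cnj c * b"
    by (simp add: cw algebra_simps)
  have 3: "cnj d * (a - w*c) + cnj (b - w*d) * c = cnj b * c + cnj d * a"
    by (simp add: cw algebra_simps)
  have 4: "cnj d * (b - w*d) + cnj (b - w*d) * d = cnj b * d + cnj d * b"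
    by (simp add: cw algebra_simps)
  show ?thesis unfolding BG_def using 1 2 3 4 e by simp
qed

lemma sq_half: "\<bar>t::real\<bar> \<le> 1/2 \<Longrightarrow> t^2 \<le> 1/4"
proof -
  assume "\<bar>t\<bar> \<le> 1/2"
  then have "\<bar>t\<bar>^2 \<le> (1/2)^2" by (intro power_mono) auto
  then show ?thesis by (simp add: power2_eq_square)
qed

lemma main:
  "\<forall>a b c d. qnorm2 c = real n \<longrightarrow> lipschitz a \<longrightarrow> lipschitz b \<longrightarrow> lipschitz c \<longrightarrow> lipschitz d
     \<longrightarrow> BG a b c d \<longrightarrow> (\<exists>f\<in>PSL2L. \<forall>q\<in>halfspace. mobius a b c d q = f q)"
proof (induction n rule: less_induct)
  case (less n)
  show ?case
  proof (intro allI impI)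
    fix a b c d :: quat
    assume n: "qnorm2 c = real n" and la: "lipschitz a" and lb: "lipschitz b"
      and lc: "lipschitz c" and ld: "lipschitz d" and bg: "BG a b c d"
    show "\<exists>f\<in>PSL2L. \<forall>q\<in>halfspace. mobius a b c d q = f q"
    proof (cases "c = 0")
      case True
      then show ?thesis using base la lb ld bg by simp
    next
      case False
      have Nc: "qnorm2 c > 0" using qnorm2_pos[OF False] .
      define p where "p = a * inverse c"
      have "Re (cnj a * c + cnj c * a) = 0" using bg by (simp add: BG_def zero_quat_def)
      then have r0: "Re a * Re c + Im1 a * Im1 c + Im2 a * Im2 c + Im3 a * Im3 c = 0"
        by (simp add: cnj_def times_quat_def plus_quat_def algebra_simps)
      have "Re p = (Re a * Re c + Im1 a * Im1 c + Im2 a * Im2 c + Im3 a * Im3 c) / qnorm2 c"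
        using Nc by (simp add: p_def times_quat_def inverse_quat_def field_simps)
      then have rp: "Re p = 0" using r0 by simp
      define w where "w = Quat 0 (of_int (round (Im1 p))) (of_int (round (Im2 p))) (of_int (round (Im3 p)))"
      have lw: "lipschitz_imag w" by (simp add: w_def lipschitz_imag_def lipschitz_def)
      have cw: "cnj w = - w" by (simp add: w_def cnj_def uminus_quat_def)
      define a' where "a' = a - w*c"
      define b' where "b' = b - w*d"
      have pc: "p * c = a" using False by (simp add: p_def mult.assoc)
      have ea: "a' = (p - w) * c" unfolding a'_def using pc by (simp add: algebra_simps)
      have "qnorm2 (p - w) \<le> 3/4"
      proof -
        have "(Im1 p - of_int (round (Im1 p)))^2 \<le> 1/4"
          using of_int_round_abs_le[of "Im1 p"] by (intro sq_half) (simp add: abs_minus_commute)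
        moreover have "(Im2 p - of_int (round (Im2 p)))^2 \<le> 1/4"
          using of_int_round_abs_le[of "Im2 p"] by (intro sq_half) (simp add: abs_minus_commute)
        moreover have "(Im3 p - of_int (round (Im3 p)))^2 \<le> 1/4"
          using of_int_round_abs_le[of "Im3 p"] by (intro sq_half) (simp add: abs_minus_commute)
        ultimately show ?thesis using rp by (simp add: qnorm2_def w_def minus_quat_def)
      qed
      then have "qnorm2 a' \<le> 3/4 * qnorm2 c" unfolding ea qnorm2_mult
        using Nc by (intro mult_right_mono) auto
      then have lt: "qnorm2 a' < real n" using Nc n by linarith
      have la': "lipschitz a'" unfolding a'_def using la lc lw
        by (simp add: lip_diff lip_mult lipschitz_imag_def)
      have lb': "lipschitz b'" unfolding b'_def using lb ld lw
        by (simp add: lip_diff lip_mult lipschitz_imag_def)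
      obtain k where k: "qnorm2 a' = of_int k" using qnorm2_Ints[OF la'] by (auto elim: Ints_cases)
      have "k \<ge> 0" using k qnorm2_nonneg[of a'] by simp
      then have m: "qnorm2 a' = real (nat k)" using k by simp
      have "nat k < n" using lt m by simp
      moreover have "BG c d a' b'" unfolding a'_def b'_def using bg_step[OF bg cw] .
      ultimately obtain f' where f': "f' \<in> PSL2L" "\<forall>q\<in>halfspace. mobius c d a' b' q = f' q"
        using less.IH m lc ld la' lb' by blast
      have "(\<lambda>q. q + w) \<circ> (inverse \<circ> f') \<in> PSL2L" using PSL2L.T[OF f'(1)] lw by (rule PSL2L.trans)
      moreover have "\<forall>q\<in>halfspace. mobius a b c d q = ((\<lambda>q. q + w) \<circ> (inverse \<circ> f')) q"
      proof
        fix q assume hq: "q \<in> halfspace"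
        then have y0: "c*q + d \<noteq> 0" using denom_nz[OF bg] by (simp add: halfspace_def)
        have e1: "a'*q + b' = (a*q+b) - w*(c*q+d)" unfolding a'_def b'_def by (simp add: algebra_simps)
        have "f' q = mobius c d a' b' q" using f'(2) hq by simp
        then have "f' q = (c*q+d) * inverse ((a*q+b) - w*(c*q+d))"
          unfolding mobius_def e1 .
        then show "mobius a b c d q = ((\<lambda>q. q + w) \<circ> (inverse \<circ> f')) q"
          using step_eq[OF y0, of "a*q+b" w] by (simp add: mobius_def)
      qed
      ultimately show ?thesis by blast
    qed
  qed
qed

theorem mainTheorem10:
  fixes a b c d :: quat
  assumes "lipschitz a" "lipschitz b" "lipschitz c" "lipschitz d"
    and "BG a b c d"
  shows "\<exists>f\<in>PSL2L. \<forall>q\<in>halfspace. mobius a b c d q = f q"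
proof -
  obtain k where k: "qnorm2 c = of_int k" using qnorm2_Ints[OF assms(3)] by (auto elim: Ints_cases)
  have "k \<ge> 0" using k qnorm2_nonneg[of c] by simp
  then have "qnorm2 c = real (nat k)" using k by simp
  then show ?thesis using main assms by blast
qed

end
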